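(* Let $N\in\mathbb N$, $\mathbb S\subset\mathbb R^n$ measurable, $\mathbf s_0\in\mathbb S$, $S\in[0,1]$, and $\gamma_1,\ldots,\gamma_{N-1}\in(0,1]$. For each $k\in\{0,\ldots,N-1\}$ let $\boldsymbol\pi^k=\{\boldsymbol\pi^k_k,\ldots,\boldsymbol\pi^k_{N-1}\}$ be a shrinking-horizon policy sequence. Assume $$\mathbb P[\mathbf s_{1,\ldots,N}\in\mathbb S\mid \mathbf s_0,\boldsymbol\pi^0]\ge S_0\ge S$$ and that for every $k\in\{1,\ldots,N-1\}$ and every state $\mathbf s_k\in\mathbb S$, $$\mathbb P[\mathbf s_{k+1,\ldots,N}\in\mathbb S\mid \mathbf s_k,\boldsymbol\pi^k]\ge S_k,\qquad S_k:=\gamma_k\,\mathbb P[\mathbf s_{k+1,\ldots,N}\in\mathbb S\mid \mathbf s_k,\boldsymbol\pi^{k-1}],$$ where in the right-hand side $\boldsymbol\pi^{k-1}$ is used through its components $\boldsymbol\pi^{k-1}_k,\ldots,\boldsymbol\pi^{k-1}_{N-1}$. Then the closed-loop policy sequence $\{\boldsymbol\pi^0_0,\boldsymbol\pi^1_1,\ldots,\boldsymbol\pi^{N-1}_{N-1}\}$ (i.e. $\mathbf u_k=\boldsymbol\pi^k_k(\mathbf s_k)$ for $k=0,\ldots,N-1$) satisfies $$\mathbb P\big[\mathbf s_{1,\ldots,N}\in\mathbb S\mid \mathbf s_0,\{\boldsymbol\pi^0_0,\ldots,\boldsymbol\pi^{N-1}_{N-1}\}\big]\ge \Big(\prod_{k=1}^{N-1}\gamma_k\Big)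 S_0 .$$
   Context: States $\mathbf s_k\in\mathbb R^n$ evolve as a controlled Markov chain with transition probability density $\rho[\mathbf s_+\mid\mathbf s,\mathbf u]$; a policy applied at time $t$ is a measurable map $\mathbf s\mapsto\mathbf u$. The notation $\mathbf s_{a,\ldots,b}\in\mathbb S$ means $\mathbf s_j\in\mathbb S$ for all $j=a,\ldots,b$. For a policy sequence $\boldsymbol\pi$ defined at times $0,\ldots,N-1$, $\mathbb P[\mathbf s_{1,\ldots,N}\in\mathbb S\mid\mathbf s_0,\boldsymbol\pi]$ is the mission-wide probability of safety (MWPS). For a policy sequence with components at times $k,\ldots,N-1$, $\mathbb P[\mathbf s_{k+1,\ldots,N}\in\mathbb S\mid\mathbf s_k,\cdot]$ is the remaining MWPS: the probability that the chain started at $\mathbf s_k$ at time $k$ and driven by those components stays in $\mathbb S$ at times $k+1,\ldots,N$. *)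

theory Defs
  imports "HOL-Analysis.Analysis"
begin

(* Remaining mission-wide probability of safety.
   rho s' s u : transition density rho[s' | s, u] w.r.t. Lebesgue measure.
   p j        : policy applied at time j (a policy sequence indexed by absolute time).
   rmwps_aux rho S N p m s : probability that the chain, started in s at time N - m
   and driven by p (N-m), ..., p (N-1), stays in S at times N-m+1, ..., N. *)
primrec rmwps_aux ::
  "('s::euclidean_space \<Rightarrow> 's \<Rightarrow> 'u \<Rightarrow> real) \<Rightarrow> 's set \<Rightarrow> nat \<Rightarrow> (nat \<Rightarrow> 's \<Rightarrow> 'u)
     \<Rightarrow> nat \<Rightarrow> 's \<Rightarrow> ennreal" where
  "rmwps_aux rho S N p 0 s = 1"
| "rmwps_aux rho S N p (Suc m) s =
     (\<integral>\<^sup>+ s'. indicator S s' * ennreal (rho s' s (p (N - Suc m) s)) * rmwps_aux rho S N p m s' \<partial>lborel)"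

definition rmwps ::
  "('s::euclidean_space \<Rightarrow> 's \<Rightarrow> 'u \<Rightarrow> real) \<Rightarrow> 's set \<Rightarrow> nat \<Rightarrow> (nat \<Rightarrow> 's \<Rightarrow> 'u)
     \<Rightarrow> nat \<Rightarrow> 's \<Rightarrow> ennreal" where
  "rmwps rho S N p k s = rmwps_aux rho S N p (N - k) s"

end

theory Submission
  imports Defs
begin

lemma cmult_nn_le:
  fixes c :: ennreal
  shows "c * integral\<^sup>N M f \<le> (\<integral>\<^sup>+ x. c * f x \<partial>M)"
proof -
  have "c * integral\<^sup>N M f = (SUP g\<in>{g. simple_function M g \<and> g \<le> f}. c * integral\<^sup>S M g)"
    unfolding nn_integral_def by (simp add: SUP_mult_left_ennreal)
  also have "\<dots> \<le> (\<integral>\<^sup>+ x. c * f x \<partial>M)"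
  proof (rule SUP_least)
    fix g assume g: "g \<in> {g. simple_function M g \<and> g \<le> f}"
    then have sg: "simple_function M g" and gf: "g \<le> f" by auto
    have "c * integral\<^sup>S M g = (\<integral>\<^sup>S x. c * g x \<partial>M)" using sg by simp
    also have "\<dots> \<le> (\<integral>\<^sup>+ x. c * f x \<partial>M)"
      unfolding nn_integral_def
    proof (rule SUP_upper)
      have "simple_function M (\<lambda>x. c * g x)" using sg by (rule simple_function_compose1)
      moreover have "(\<lambda>x. c * g x) \<le> (\<lambda>x. c * f x)"
        using gf by (auto simp: le_fun_def intro: mult_left_mono)
      ultimately show "(\<lambda>x. c * g x) \<in> {g. simple_function M g \<and> g \<le> (\<lambda>x. c * f x)}" by simp
    qed
    finally show "c * integral\<^sup>S M g \<le> (\<integral>\<^sup>+ x. c * f x \<partial>M)" .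
  qed
  finally show ?thesis .
qed

lemma aux_cong:
  "m \<le> N \<Longrightarrow> (\<And>j. N - m \<le> j \<Longrightarrow> j < N \<Longrightarrow> p j = q j) \<Longrightarrow> rmwps_aux rho S N p m s = rmwps_aux rho S N q m s"
proof (induction m arbitrary: s)
  case 0 then show ?case by simp
next
  case (Suc m)
  have e: "p (N - Suc m) = q (N - Suc m)" using Suc.prems by simp
  have "\<And>s. rmwps_aux rho S N p m s = rmwps_aux rho S N q m s" using Suc.IH Suc.prems by simp
  then show ?case using e by simp
qed

theorem proposition1:
  fixes rho :: "real^'n \<Rightarrow> real^'n \<Rightarrow> 'u::topological_space \<Rightarrow> real"
    and Sset :: "(real^'n) set" and s0 :: "real^'n"
    and N :: nat and Smin S0 :: real and \<gamma> :: "nat \<Rightarrow> real"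
    and pi :: "nat \<Rightarrow> nat \<Rightarrow> real^'n \<Rightarrow> 'u"
  assumes rho_meas: "(\<lambda>(s', s, u). rho s' s u) \<in> borel_measurable (borel \<Otimes>\<^sub>M borel \<Otimes>\<^sub>M borel)"
    and rho_nonneg: "\<And>s' s u. 0 \<le> rho s' s u"
    and rho_prob: "\<And>s u. (\<integral>\<^sup>+ s'. ennreal (rho s' s u) \<partial>lborel) = 1"
    and pi_meas: "\<And>k j. pi k j \<in> borel_measurable borel"
    and S_meas: "Sset \<in> sets lborel"
    and s0_in: "s0 \<in> Sset"
    and Smin: "0 \<le> Smin" "Smin \<le> 1"
    and gamma: "\<And>k. k \<in> {1..<N} \<Longrightarrow> 0 < \<gamma> k \<and> \<gamma> k \<le> 1"
    and init: "rmwps rho Sset N (pi 0) 0 s0 \<ge> ennreal S0" "S0 \<ge> Smin"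
    and recur: "\<And>k s. k \<in> {1..<N} \<Longrightarrow> s \<in> Sset \<Longrightarrow>
       rmwps rho Sset N (pi k) k s \<ge> ennreal (\<gamma> k) * rmwps rho Sset N (pi (k - 1)) k s"
  shows "rmwps rho Sset N (\<lambda>j. pi j j) 0 s0 \<ge> ennreal ((\<Prod>k=1..<N. \<gamma> k) * S0)"
proof -
  define c where "c = (\<lambda>j. pi j j)"
  define G where "G m = (\<Prod>j=N-m+1..<N. \<gamma> j)" for m
  have Gnn: "0 \<le> G m" for m unfolding G_def using gamma
  proof (intro prod_nonneg)
    fix j assume "j \<in> {N - m + 1..<N}"
    then have "j \<in> {1..<N}" by auto
    then show "0 \<le> \<gamma> j" using gamma by force
  qed
  have main: "1 \<le> m \<Longrightarrow> m \<le> N \<Longrightarrow> s \<in> Sset \<Longrightarrow>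
      ennreal (G m) * rmwps_aux rho Sset N (pi (N - m)) m s \<le> rmwps_aux rho Sset N c m s" for m s
  proof (induction m arbitrary: s)
    case 0 then show ?case by simp
  next
    case (Suc m)
    show ?case
    proof (cases "m = 0")
      case True
      have "rmwps_aux rho Sset N c 1 s = rmwps_aux rho Sset N (pi (N - 1)) 1 s"
      proof (rule aux_cong)
        show "1 \<le> N" using Suc.prems True by simp
        fix j assume "N - 1 \<le> j" "j < N"
        then have "j = N - 1" by simp
        then show "c j = pi (N - 1) j" by (simp add: c_def)
      qed
      moreover have "G 1 = 1" unfolding G_def using Suc.prems by simp
      ultimately show ?thesis using True by simp
    next
      case False
      define k where "k = N - Suc m"
      have k1: "Suc k = N - m" "N - m \<in> {1..<N}" using Suc.prems False by (auto simp: k_def)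
      have GS: "G (Suc m) = G m * \<gamma> (N - m)"
      proof -
        have "{N - Suc m + 1..<N} = insert (N - m) {N - m + 1..<N}" using Suc.prems False by auto
        then show ?thesis unfolding G_def by (simp add: mult.commute)
      qed
      have gnn: "0 \<le> \<gamma> (N - m)" using gamma[OF k1(2)] by simp
      have pt: "ennreal (G (Suc m)) * (indicator Sset s' * ennreal (rho s' s (pi k (N - Suc m) s)) * rmwps_aux rho Sset N (pi k) m s')
          \<le> indicator Sset s' * ennreal (rho s' s (c (N - Suc m) s)) * rmwps_aux rho Sset N c m s'" for s'
      proof (cases "s' \<in> Sset")
        case False then show ?thesis by simp
      next
        case True
        have r: "ennreal (\<gamma> (N - m)) * rmwps_aux rho Sset N (pi k) m s' \<le> rmwps_aux rho Sset N (pi (N - m)) m s'"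
          using recur[OF k1(2) True] k1 unfolding rmwps_def by (simp add: k_def)
        have ih: "ennreal (G m) * rmwps_aux rho Sset N (pi (N - m)) m s' \<le> rmwps_aux rho Sset N c m s'"
          using Suc.IH[of s'] Suc.prems False True by simp
        have "ennreal (G (Suc m)) * rmwps_aux rho Sset N (pi k) m s'
             = ennreal (G m) * (ennreal (\<gamma> (N - m)) * rmwps_aux rho Sset N (pi k) m s')"
          using GS Gnn gnn by (simp add: ennreal_mult mult.assoc)
        also have "\<dots> \<le> ennreal (G m) * rmwps_aux rho Sset N (pi (N - m)) m s'"
          by (rule mult_left_mono[OF r]) simp
        also have "\<dots> \<le> rmwps_aux rho Sset N c m s'" by (rule ih)
        finally have le: "ennreal (G (Suc m)) * rmwps_aux rho Sset N (pi k) m s' \<le> rmwps_aux rho Sset N c m s'" .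
        have cc: "c (N - Suc m) = pi k (N - Suc m)" by (simp add: c_def k_def)
        show ?thesis using True cc
          using mult_left_mono[OF le, of "ennreal (rho s' s (pi k (N - Suc m) s))"]
          by (simp add: mult.commute mult.left_commute)
      qed
      have "ennreal (G (Suc m)) * rmwps_aux rho Sset N (pi (N - Suc m)) (Suc m) s
          \<le> (\<integral>\<^sup>+ s'. ennreal (G (Suc m)) * (indicator Sset s' * ennreal (rho s' s (pi k (N - Suc m) s)) * rmwps_aux rho Sset N (pi k) m s') \<partial>lborel)"
        unfolding k_def by (simp only: rmwps_aux.simps) (rule cmult_nn_le)
      also have "\<dots> \<le> rmwps_aux rho Sset N c (Suc m) s"
        by (simp only: rmwps_aux.simps) (rule nn_integral_mono, rule pt)
      finally show ?thesis .
    qed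
  qed
  show ?thesis
  proof (cases "N = 0")
    case True
    then show ?thesis using init unfolding rmwps_def by simp
  next
    case False
    have G: "G N = (\<Prod>k=1..<N. \<gamma> k)" unfolding G_def by simp
    have m: "ennreal (G N) * rmwps_aux rho Sset N (pi 0) N s0 \<le> rmwps_aux rho Sset N c N s0"
      using main[of N s0] False s0_in by simp
    show ?thesis
    proof (cases "S0 \<ge> 0")
      case False
      then have "(\<Prod>k=1..<N. \<gamma> k) * S0 \<le> 0" using Gnn[of N] G by (simp add: mult_nonneg_nonpos)
      then have "ennreal ((\<Prod>k=1..<N. \<gamma> k) * S0) = 0" by (rule ennreal_neg)
      then show ?thesis by simp
    next
      case True
      have "ennreal ((\<Prod>k=1..<N. \<gamma> k) * S0) = ennreal (G N) * ennreal S0"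
        using G Gnn[of N] True by (simp add: ennreal_mult)
      also have "\<dots> \<le> ennreal (G N) * rmwps_aux rho Sset N (pi 0) N s0"
        using init(1) unfolding rmwps_def by (intro mult_left_mono) auto
      also have "\<dots> \<le> rmwps rho Sset N (\<lambda>j. pi j j) 0 s0" using m unfolding rmwps_def c_def by simp
      finally show ?thesis .
    qed
  qed
qed

end
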